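(* Let $A$ be an $n\times m$ Boolean matrix and $B$ an $m\times n$ Boolean matrix, and suppose neither $A$ nor $B$ has a zero line (zero row or zero column). If $AB$ and $BA$ are both primitive, then $$|k(AB)-k(BA)|\leq 1.$$
   Context: All matrices are Boolean $(0,1)$-matrices, and products are computed in Boolean arithmetic ($1+1=1$, $0+0=0$, $1+0=1$). A square nonnegative (Boolean) matrix $C$ is primitive if $C^r$ has all entries positive for some positive integer $r$. For a primitive matrix $C$, its scrambling index $k(C)$ is the smallest positive integer $k$ such that any two rows of $C^k$ have a positive entry in a common position; equivalently, the smallest positive integer $k$ with $C^k(C^t)^k=J$, where $C^t$ is the transpose and $J$ is the all-ones matrix. *)

theory Defs
  imports Main
begin

text \<open>Boolean (0,1)-matrices with rows indexed by a finite type 'a and columns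
  by a finite type 'b, represented as functions 'a \<Rightarrow> 'b \<Rightarrow> bool
  (True = entry 1).\<close>

type_synonym ('a, 'b) bmat = "'a \<Rightarrow> 'b \<Rightarrow> bool"

definition bmult :: "('a, 'b) bmat \<Rightarrow> ('b, 'c) bmat \<Rightarrow> ('a, 'c) bmat" where
  "bmult A B = (\<lambda>i j. \<exists>k. A i k \<and> B k j)"

definition bident :: "('a, 'a) bmat" where
  "bident = (\<lambda>i j. i = j)"

fun bpow :: "('a, 'a) bmat \<Rightarrow> nat \<Rightarrow> ('a, 'a) bmat" where
  "bpow C 0 = bident"
| "bpow C (Suc k) = bmult C (bpow C k)"

definition btrans :: "('a, 'b) bmat \<Rightarrow> ('b, 'a) bmat" where
  "btrans A = (\<lambda>j i. A i j)"

definition bJ :: "('a, 'b) bmat" where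
  "bJ = (\<lambda>i j. True)"

definition no_zero_line :: "('a, 'b) bmat \<Rightarrow> bool" where
  "no_zero_line A \<longleftrightarrow> (\<forall>i. \<exists>j. A i j) \<and> (\<forall>j. \<exists>i. A i j)"

definition primitive :: "('a::finite, 'a) bmat \<Rightarrow> bool" where
  "primitive C \<longleftrightarrow> (\<exists>r>0. bpow C r = bJ)"

definition scrambling_index :: "('a::finite, 'a) bmat \<Rightarrow> nat" where
  "scrambling_index C = (LEAST k. k > 0 \<and> bmult (bpow C k) (bpow (btrans C) k) = bJ)"

end

theory Submission
  imports Defs
begin

lemma bmult_assoc: "bmult (bmult A B) C = bmult A (bmult B C)"
  unfolding bmult_def by (rule ext, rule ext) blast

lemma bmult_id_l: "bmult bident A = A" unfolding bmult_def bident_def by auto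
lemma bmult_id_r: "bmult A bident = A" unfolding bmult_def bident_def by auto

lemma bpow_Suc': "bpow C (Suc k) = bmult (bpow C k) C"
proof (induction k)
  case 0 thus ?case by (simp add: bmult_id_l bmult_id_r)
next
  case (Suc k)
  have "bpow C (Suc (Suc k)) = bmult C (bmult (bpow C k) C)" using Suc by simp
  also have "\<dots> = bmult (bmult C (bpow C k)) C" by (simp add: bmult_assoc)
  finally show ?case by simp
qed

lemma bpow_trans: "bpow (btrans C) k i j = bpow C k j i"
proof (induction k arbitrary: i j)
  case 0 thus ?case by (auto simp: bident_def)
next
  case (Suc k)
  have "bpow (btrans C) (Suc k) i j = (\<exists>l. C l i \<and> bpow C k j l)"
    by (simp only: bpow.simps bmult_def Suc) (simp add: btrans_def)
  moreover have "bpow C (Suc k) j i = (\<exists>l. bpow C k j l \<and> C l i)"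
    by (simp only: bpow_Suc') (simp add: bmult_def)
  ultimately show ?case by blast
qed

definition scr :: "('a, 'a) bmat \<Rightarrow> nat \<Rightarrow> bool" where
  "scr C k \<longleftrightarrow> (\<forall>i j. \<exists>l. bpow C k i l \<and> bpow C k j l)"

lemma scr_iff: "bmult (bpow C k) (bpow (btrans C) k) = bJ \<longleftrightarrow> scr C k"
  unfolding scr_def bJ_def bmult_def bpow_trans by (metis (full_types))

lemma bpow_prod: "bpow (bmult A B) (Suc k) = bmult A (bmult (bpow (bmult B A) k) B)"
proof (induction k)
  case 0 thus ?case by (simp add: bmult_id_l bmult_id_r)
next
  case (Suc k)
  have "bpow (bmult A B) (Suc (Suc k)) = bmult (bmult A B) (bmult A (bmult (bpow (bmult B A) k) B))"
    using Suc by simp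
  also have "\<dots> = bmult A (bmult (bmult (bmult B A) (bpow (bmult B A) k)) B)"
    by (simp add: bmult_assoc)
  finally show ?case by simp
qed

lemma scr_step:
  assumes "\<forall>i. \<exists>j. A i j" "\<forall>i. \<exists>j. B i j" "scr (bmult B A) k"
  shows "scr (bmult A B) (Suc k)"
  unfolding scr_def bpow_prod
proof (intro allI)
  fix i j
  obtain a where a: "A i a" using assms(1) by blast
  obtain a' where a': "A j a'" using assms(1) by blast
  obtain l where l: "bpow (bmult B A) k a l" "bpow (bmult B A) k a' l"
    using assms(3) unfolding scr_def by blast
  obtain c where c: "B l c" using assms(2) by blast
  show "\<exists>x. bmult A (bmult (bpow (bmult B A) k) B) i x \<and> bmult A (bmult (bpow (bmult B A) k) B) j x"
    using a a' l c unfolding bmult_def by blast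
qed

lemma prim_scr:
  assumes "primitive C" shows "\<exists>k>0. scr C k"
proof -
  obtain r where r: "r > 0" "bpow C r = bJ" using assms unfolding primitive_def by blast
  hence "scr C r" unfolding scr_def bJ_def by auto
  thus ?thesis using r by blast
qed

lemma si_def': "scrambling_index C = (LEAST k. k > 0 \<and> scr C k)"
  unfolding scrambling_index_def scr_iff ..

lemma one_side:
  fixes A :: "('n::finite, 'm::finite) bmat" and B :: "('m, 'n) bmat"
  assumes "\<forall>i. \<exists>j. A i j" "\<forall>i. \<exists>j. B i j" "primitive (bmult B A)"
  shows "scrambling_index (bmult A B) \<le> scrambling_index (bmult B A) + 1"
proof -
  let ?k = "scrambling_index (bmult B A)"
  obtain k0 where "k0 > 0 \<and> scr (bmult B A) k0" using prim_scr[OF assms(3)] by blast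
  hence "?k > 0 \<and> scr (bmult B A) ?k" unfolding si_def' by (rule LeastI)
  hence "scr (bmult A B) (Suc ?k)" using scr_step assms by blast
  hence "(LEAST k. k > 0 \<and> scr (bmult A B) k) \<le> Suc ?k" by (intro Least_le) simp
  thus ?thesis unfolding si_def' by simp
qed

theorem lemma2p1:
  fixes A :: "('n::finite, 'm::finite) bmat" and B :: "('m, 'n) bmat"
  assumes "no_zero_line A" and "no_zero_line B"
    and "primitive (bmult A B)" and "primitive (bmult B A)"
  shows "\<bar>int (scrambling_index (bmult A B)) - int (scrambling_index (bmult B A))\<bar> \<le> 1"
proof -
  have a: "\<forall>i. \<exists>j. A i j" and b: "\<forall>i. \<exists>j. B i j"
    using assms(1,2) unfolding no_zero_line_def by auto
  have "scrambling_index (bmult A B) \<le> scrambling_index (bmult B A) + 1"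
    using one_side[OF a b assms(4)] .
  moreover have "scrambling_index (bmult B A) \<le> scrambling_index (bmult A B) + 1"
    using one_side[OF b a assms(3)] .
  ultimately show ?thesis by linarith
qed

end
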